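(* In every configuration reached during a fair execution of Algorithm DLE from a permitted initial configuration, the following hold: (1) for any expanded particle, its head is in $S_e$ and its tail is not in $S_e$; (2) $S_e$ is simply-connected and non-empty; (3) every boundary point of $S_e$ is occupied by a particle; (4) the $eligible$ variables of all particles are consistent, i.e., for every particle $p$ and every port $i\in\{0,\dots,5\}$, $p.eligible[i]=true$ if and only if the point reached via port $i$ of $p$'s head is in $S_e$.
   Context: Geometry. The triangular grid $G$ has as vertices ("points") the points of the regular triangular lattice in the plane, adjacent iff at unit distance; each point has six incident edges, cyclically ordered clockwise. A shape is a finite set of points (identified with its induced subgraph). For a connected shape $S$: the unbounded face is the outer face; a bounded face containing a grid point not in $S$ is a hole, whose grid points are hole points; the area of $S$ is $S$ together with its hole points; $S$ is simply-connected if it is connected with no holes; the outer boundary is the set of points of $S$ on the boundary of the outer face; a boundary point is a point of $S$ adjacent to a point not in $S$. For a boundary point $v$, a local boundary $B$ of $v$ w.r.t. $S$ is a maximal clockwise cyclic interval of consecutive edges at $v$ leading to points not in $S$, with boundary count $c(v,B)=|B|-2$. $v$ is redundant if its neighbors in $S$ induce a connected subgraph; erodable if redundant and on the outer boundary (then it has a single local boundary $B$); SCE if erodable and $c(v,B)>0$. Model (amoebot, strong scheduler). Anonymous constant-memory particles each occupy one point (contracted) or two adjacent points (expanded; head and tail); no point is occupied twice. Each particle labels the edges at its point by ports $0,\dots,5$; all share clockwise chirality, and a particle knows the port a neighbor uses for their common edge. Particles read and write neighbors' memories. A contracted particle may expand into an adjacent unoccupied point (its new head); an expanded one may contract into either of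 its points; handovers allowed. An execution is a sequence of atomic activations of single particles; in an activation a particle reads neighbors' memories, computes, writes memories, and performs at most one movement. A fair execution activates every particle infinitely often. A permitted initial configuration $C_0$: all particles contracted, at least one particle, set $S_P(C_0)$ of occupied points connected. Input: each particle knows, for each port $i$, whether the point via port $i$ lies in the outer face of $S_P(C_0)$. Algorithm DLE. It maintains a set $S_e$ of eligible points, initially the area of $S_P(C_0)$; points are only removed. Each particle $p$ has $status\in\{undecided,leader,follower\}$ (initially $undecided$) and $eligible[0..5]$ (initially $eligible[i]$ true iff the point via port $i$ is not in the outer face of $S_P(C_0)$). On activation: (a) if $p$ is expanded, it contracts into its head; (b) else if $p$ and all its neighbors have status $\ne undecided$, $p$ terminates; (c) else if $p.status=undecided$ ($p$ contracted at $v$): if by its $eligible$ array no neighbor of $v$ is in $S_e$, it sets $status:=leader$; else if $v$ is SCE w.r.t. $S_e$, then $v$ is removed from $S_e$ and each neighboring particle whose head is adjacent to $v$ sets its $eligible$ entry for $v$ to false; then, if $v$ has an adjacent point $u\in S_e$ not occupied by any particle, $p$ sets its $eligible$ entries to true except the one for the port from $u$ back to $v$ (set false) and expands into $u$; otherwise $p$ sets $status:=follower$. Otherwise $p$ does nothing. *)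

theory Defs
  imports "HOL-Analysis.Analysis"
begin

text \<open>Grid points in axial coordinates; the point (a,b) is drawn in the plane at
  a + b * omega, with omega = cis(pi/3).\<close>
type_synonym point = "int \<times> int"

definition pt_add :: "point \<Rightarrow> point \<Rightarrow> point" where
  "pt_add u d = (fst u + fst d, snd u + snd d)"

text \<open>The six unit directions, listed in clockwise order (index taken mod 6).\<close>
definition gdir :: "nat \<Rightarrow> point" where
  "gdir i = (case i mod 6 of
      0 \<Rightarrow> (1, 0) | Suc 0 \<Rightarrow> (1, -1) | Suc (Suc 0) \<Rightarrow> (0, -1)
    | Suc (Suc (Suc 0)) \<Rightarrow> (-1, 0) | Suc (Suc (Suc (Suc 0))) \<Rightarrow> (-1, 1) | _ \<Rightarrow> (0, 1))"

definition adj :: "point \<Rightarrow> point \<Rightarrow> bool" where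
  "adj u v \<longleftrightarrow> (\<exists>i<6. v = pt_add u (gdir i))"

definition emb :: "point \<Rightarrow> complex" where
  "emb p = of_int (fst p) + of_int (snd p) * cis (pi / 3)"

definition shape_connected :: "point set \<Rightarrow> bool" where
  "shape_connected S \<longleftrightarrow>
     (\<forall>u\<in>S. \<forall>v\<in>S. (u, v) \<in> {(x, y). x \<in> S \<and> y \<in> S \<and> adj x y}\<^sup>*)"

definition drawing :: "point set \<Rightarrow> complex set" where
  "drawing S = emb ` S \<union>
     \<Union> {closed_segment (emb u) (emb v) | u v. u \<in> S \<and> v \<in> S \<and> adj u v}"

definition outer_region :: "point set \<Rightarrow> complex set" where
  "outer_region S = {z. z \<notin> drawing S \<and>
      \<not> bounded (connected_component_set (- drawing S) z)}"

definition outer_face_point :: "point set \<Rightarrow> point \<Rightarrow> bool" where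
  "outer_face_point S q \<longleftrightarrow> q \<notin> S \<and> emb q \<in> outer_region S"

definition hole_point :: "point set \<Rightarrow> point \<Rightarrow> bool" where
  "hole_point S q \<longleftrightarrow> q \<notin> S \<and> emb q \<notin> drawing S \<and>
      bounded (connected_component_set (- drawing S) (emb q))"

definition shape_area :: "point set \<Rightarrow> point set" where
  "shape_area S = S \<union> {q. hole_point S q}"

definition simply_connected_shape :: "point set \<Rightarrow> bool" where
  "simply_connected_shape S \<longleftrightarrow> shape_connected S \<and> (\<forall>q. \<not> hole_point S q)"

definition on_outer_boundary :: "point set \<Rightarrow> point \<Rightarrow> bool" where
  "on_outer_boundary S v \<longleftrightarrow> v \<in> S \<and> emb v \<in> frontier (outer_region S)"

definition boundary_point :: "point set \<Rightarrow> point \<Rightarrow> bool" where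
  "boundary_point S v \<longleftrightarrow> v \<in> S \<and> (\<exists>u. adj v u \<and> u \<notin> S)"

definition cyc_interval :: "nat \<Rightarrow> nat \<Rightarrow> nat set" where
  "cyc_interval s l = {(s + k) mod 6 | k. k < l}"

text \<open>B is a local boundary of v w.r.t. S: a maximal clockwise cyclic interval of
  consecutive edges at v leading to points not in S (edges identified by direction index).\<close>
definition local_boundary :: "point set \<Rightarrow> point \<Rightarrow> nat set \<Rightarrow> bool" where
  "local_boundary S v B \<longleftrightarrow> v \<in> S \<and>
     (\<exists>s<6. \<exists>l. 1 \<le> l \<and> l \<le> 6 \<and> B = cyc_interval s l \<and>
        (\<forall>i\<in>B. pt_add v (gdir i) \<notin> S) \<and>
        (l < 6 \<longrightarrow> pt_add v (gdir ((s + 5) mod 6)) \<in> S \<and> pt_add v (gdir ((s + l) mod 6)) \<in> S))"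

definition boundary_count :: "nat set \<Rightarrow> int" where
  "boundary_count B = int (card B) - 2"

definition redundant :: "point set \<Rightarrow> point \<Rightarrow> bool" where
  "redundant S v \<longleftrightarrow> v \<in> S \<and> shape_connected {u \<in> S. adj v u}"

definition erodable :: "point set \<Rightarrow> point \<Rightarrow> bool" where
  "erodable S v \<longleftrightarrow> redundant S v \<and> on_outer_boundary S v"

definition SCE :: "point set \<Rightarrow> point \<Rightarrow> bool" where
  "SCE S v \<longleftrightarrow> erodable S v \<and> (\<exists>B. local_boundary S v B \<and> boundary_count B > 0)"

datatype status = Undecided | Leader | Follower

text \<open>Particles are identified by elements of a type 'p (identities are only for the analysis;
  particles are anonymous).  A particle is contracted iff head = tail.  Se is the (ghost)
  set of eligible points maintained by the algorithm.  pelig p i refers to port i of p's head.\<close>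
record 'p config =
  phead   :: "'p \<Rightarrow> point"
  ptail   :: "'p \<Rightarrow> point"
  pstatus :: "'p \<Rightarrow> status"
  pelig   :: "'p \<Rightarrow> nat \<Rightarrow> bool"
  pterm   :: "'p \<Rightarrow> bool"
  Se      :: "point set"

text \<open>Each particle p has a fixed port labelling; with common clockwise chirality this is a
  rotation: port i of p is the global direction (i + off p) mod 6.\<close>
definition port_pt :: "('p \<Rightarrow> nat) \<Rightarrow> ('p, 'z) config_scheme \<Rightarrow> 'p \<Rightarrow> nat \<Rightarrow> point" where
  "port_pt off C p i = pt_add (phead C p) (gdir (i + off p))"

definition occupied :: "'p set \<Rightarrow> ('p, 'z) config_scheme \<Rightarrow> point set" where
  "occupied P C = phead C ` P \<union> ptail C ` P"

definition nbr_particles :: "'p set \<Rightarrow> ('p, 'z) config_scheme \<Rightarrow> 'p \<Rightarrow> 'p set" where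
  "nbr_particles P C p = {q \<in> P. q \<noteq> p \<and>
     (\<exists>x\<in>{phead C q, ptail C q}. \<exists>y\<in>{phead C p, ptail C p}. adj y x)}"

definition permitted_init :: "('p \<Rightarrow> nat) \<Rightarrow> 'p set \<Rightarrow> 'p config \<Rightarrow> bool" where
  "permitted_init off P C \<longleftrightarrow>
     finite P \<and> P \<noteq> {} \<and>
     (\<forall>p\<in>P. ptail C p = phead C p) \<and>
     inj_on (phead C) P \<and>
     shape_connected (phead C ` P) \<and>
     (\<forall>p\<in>P. pstatus C p = Undecided \<and> \<not> pterm C p \<and>
        (\<forall>i<6. pelig C p i \<longleftrightarrow> \<not> outer_face_point (phead C ` P) (port_pt off C p i))) \<and>
     Se C = shape_area (phead C ` P)"

text \<open>One atomic activation of particle p under Algorithm DLE (relation, since the choice of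
  the point u to expand into is nondeterministic).\<close>
definition dle_act :: "('p \<Rightarrow> nat) \<Rightarrow> 'p set \<Rightarrow> 'p \<Rightarrow> 'p config \<Rightarrow> 'p config \<Rightarrow> bool" where
  "dle_act off P p C C' \<longleftrightarrow>
    (let v = phead C p in
     if pterm C p then C' = C
     else if phead C p \<noteq> ptail C p then
       C' = C\<lparr>ptail := (ptail C)(p := phead C p)\<rparr>
     else if pstatus C p \<noteq> Undecided \<and> (\<forall>q\<in>nbr_particles P C p. pstatus C q \<noteq> Undecided) then
       C' = C\<lparr>pterm := (pterm C)(p := True)\<rparr>
     else if pstatus C p = Undecided then
       (if (\<forall>i<6. \<not> pelig C p i) then
          C' = C\<lparr>pstatus := (pstatus C)(p := Leader)\<rparr>
        else if SCE (Se C) v then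
          (let Se' = Se C - {v};
               el1 = (\<lambda>q i. if q \<in> nbr_particles P C p \<and> adj (phead C q) v \<and> port_pt off C q i = v
                             then False else pelig C q i);
               free = {u. adj v u \<and> u \<in> Se' \<and> u \<notin> occupied P C}
           in (\<exists>u\<in>free. C' = C\<lparr>Se := Se',
                                 pelig := el1(p := (\<lambda>i. pt_add u (gdir (i + off p)) \<noteq> v)),
                                 phead := (phead C)(p := u)\<rparr>)
              \<or> (free = {} \<and> C' = C\<lparr>Se := Se', pelig := el1,
                                     pstatus := (pstatus C)(p := Follower)\<rparr>))
        else C' = C)
     else C' = C)"

definition fair_dle_execution ::
  "('p \<Rightarrow> nat) \<Rightarrow> 'p set \<Rightarrow> (nat \<Rightarrow> 'p config) \<Rightarrow> (nat \<Rightarrow> 'p) \<Rightarrow> bool" where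
  "fair_dle_execution off P E sched \<longleftrightarrow>
     permitted_init off P (E 0) \<and>
     (\<forall>n. sched n \<in> P \<and> dle_act off P (sched n) (E n) (E (Suc n))) \<and>
     (\<forall>p\<in>P. \<forall>n. \<exists>m\<ge>n. sched m = p)"

end

theory Submission
  imports Defs
begin


lemma mod6_cases: "(i::nat) mod 6 = 0 \<or> i mod 6 = 1 \<or> i mod 6 = 2 \<or> i mod 6 = 3 \<or> i mod 6 = 4 \<or> i mod 6 = 5"
  by presburger

lemma gdir_explicit: "gdir i = (if i mod 6 = 0 then (1,0) else if i mod 6 = 1 then (1,-1)
   else if i mod 6 = 2 then (0,-1) else if i mod 6 = 3 then (-1,0) else if i mod 6 = 4 then (-1,1) else (0,1))"
proof -
  have c1: "i mod 6 = 1 \<Longrightarrow> gdir i = (1,-1)"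
  proof -
    assume "i mod 6 = 1" then have h: "i mod 6 = Suc 0" by simp
    show ?thesis unfolding gdir_def h by (simp only: nat.case)
  qed
  have c2: "i mod 6 = 2 \<Longrightarrow> gdir i = (0,-1)"
  proof -
    assume "i mod 6 = 2" then have h: "i mod 6 = Suc (Suc 0)" by simp
    show ?thesis unfolding gdir_def h by (simp only: nat.case)
  qed
  have c3: "i mod 6 = 3 \<Longrightarrow> gdir i = (-1,0)"
  proof -
    assume "i mod 6 = 3" then have h: "i mod 6 = Suc (Suc (Suc 0))" by simp
    show ?thesis unfolding gdir_def h by (simp only: nat.case)
  qed
  have c4: "i mod 6 = 4 \<Longrightarrow> gdir i = (-1,1)"
  proof -
    assume "i mod 6 = 4" then have h: "i mod 6 = Suc (Suc (Suc (Suc 0)))" by simp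
    show ?thesis unfolding gdir_def h by (simp only: nat.case)
  qed
  have c5: "i mod 6 = 5 \<Longrightarrow> gdir i = (0,1)"
  proof -
    assume "i mod 6 = 5" then have h: "i mod 6 = Suc (Suc (Suc (Suc (Suc 0))))" by simp
    show ?thesis unfolding gdir_def h by (simp only: nat.case)
  qed
  have c0: "i mod 6 = 0 \<Longrightarrow> gdir i = (1,0)"
  proof -
    assume h: "i mod 6 = 0"
    show ?thesis unfolding gdir_def h by (simp only: nat.case)
  qed
  show ?thesis using mod6_cases[of i] c0 c1 c2 c3 c4 c5 by auto
qed

definition D6 :: "point set" where
  "D6 = {(1,0),(1,-1),(0,-1),(-1,0),(-1,1),(0,1)}"

lemma gdir_D6: "gdir i \<in> D6"
  unfolding gdir_explicit D6_def by auto

lemma gdir_mod: "gdir (i mod 6) = gdir i"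
  unfolding gdir_explicit by simp

lemma gdir_add_mod: "gdir (j + k) = gdir (j mod 6 + k)"
  by (metis gdir_mod mod_add_left_eq)

lemma D6_gdir: "d \<in> D6 \<Longrightarrow> \<exists>i<6. gdir i = d"
  unfolding D6_def
  apply (elim insertE)
  apply (rule exI[of _ 0]; simp add: gdir_explicit)
  apply (rule exI[of _ 1]; simp add: gdir_explicit)
  apply (rule exI[of _ 2]; simp add: gdir_explicit)
  apply (rule exI[of _ 3]; simp add: gdir_explicit)
  apply (rule exI[of _ 4]; simp add: gdir_explicit)
  apply (rule exI[of _ 5]; simp add: gdir_explicit)
  by simp

lemma adj_iff: "adj u v \<longleftrightarrow> (fst v - fst u, snd v - snd u) \<in> D6"
proof
  assume "adj u v"
  then obtain i where "v = pt_add u (gdir i)" unfolding adj_def by auto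
  then have "(fst v - fst u, snd v - snd u) = gdir i" by (simp add: pt_add_def)
  then show "(fst v - fst u, snd v - snd u) \<in> D6" using gdir_D6 by metis
next
  assume "(fst v - fst u, snd v - snd u) \<in> D6"
  then obtain i where i: "i<6" "gdir i = (fst v - fst u, snd v - snd u)" using D6_gdir by blast
  then have "v = pt_add u (gdir i)" unfolding pt_add_def by (simp add: prod_eq_iff)
  then show "adj u v" unfolding adj_def using i(1) by blast
qed

lemma D6_iff: "(a,b) \<in> D6 \<longleftrightarrow> (a = 1 \<and> b = 0) \<or> (a = 1 \<and> b = -1) \<or> (a = 0 \<and> b = -1)
   \<or> (a = -1 \<and> b = 0) \<or> (a = -1 \<and> b = 1) \<or> (a = 0 \<and> b = 1)"
  unfolding D6_def by simp

lemma adj_iff2: "adj u v \<longleftrightarrow> (let a = fst v - fst u; b = snd v - snd u in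
   (a = 1 \<and> b = 0) \<or> (a = 1 \<and> b = -1) \<or> (a = 0 \<and> b = -1)
   \<or> (a = -1 \<and> b = 0) \<or> (a = -1 \<and> b = 1) \<or> (a = 0 \<and> b = 1))"
  unfolding adj_iff D6_iff Let_def ..

lemma adj_sym: "adj u v \<Longrightarrow> adj v u"
  unfolding adj_iff2 Let_def by (elim disjE conjE) simp_all

lemma adj_irrefl: "\<not> adj u u"
  unfolding adj_iff2 Let_def by simp

lemma adj_pt_add: "adj u (pt_add u (gdir i))"
  unfolding adj_iff pt_add_def using gdir_D6[of i] by simp

lemma adj_ex: "adj u v \<Longrightarrow> \<exists>j<6. v = pt_add u (gdir j)"
  unfolding adj_def by auto

lemma gdir_next: "pt_add (pt_add v (gdir j)) (gdir (j+2)) = pt_add v (gdir (j+1))"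
  unfolding gdir_add_mod[of j 2] gdir_add_mod[of j 1] using mod6_cases[of j]
  by (elim disjE) (simp_all add: gdir_explicit pt_add_def)

lemma gdir_prev: "pt_add (pt_add v (gdir j)) (gdir (j+4)) = pt_add v (gdir (j+5))"
  unfolding gdir_add_mod[of j 4] gdir_add_mod[of j 5] using mod6_cases[of j]
  by (elim disjE) (simp_all add: gdir_explicit pt_add_def)

lemma pt_add_gdir_neq: "pt_add v (gdir j) \<noteq> v"
  using gdir_D6[of j] unfolding pt_add_def by (cases "gdir j"; cases v) (auto simp: D6_iff)



definition co1 :: "complex \<Rightarrow> real" where "co1 z = Re z - Im z / sqrt 3"
definition co2 :: "complex \<Rightarrow> real" where "co2 z = 2 * Im z / sqrt 3"

lemma Re_emb: "Re (emb p) = of_int (fst p) + of_int (snd p) / 2"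
  unfolding emb_def by (simp add: cos_60)

lemma Im_emb: "Im (emb p) = of_int (snd p) * sqrt 3 / 2"
  unfolding emb_def by (simp add: sin_60)

lemma co1_emb: "co1 (emb p) = of_int (fst p)"
  unfolding co1_def Re_emb Im_emb by simp

lemma co2_emb: "co2 (emb p) = of_int (snd p)"
  unfolding co2_def Im_emb by simp

lemma co1_comb: "co1 ((1 - t) *\<^sub>R x + t *\<^sub>R y) = (1 - t) * co1 x + t * co1 y"
  unfolding co1_def by (simp add: algebra_simps diff_divide_distrib add_divide_distrib)

lemma co2_comb: "co2 ((1 - t) *\<^sub>R x + t *\<^sub>R y) = (1 - t) * co2 x + t * co2 y"
  unfolding co2_def by (simp add: field_simps)

lemma emb_inj: "emb p = emb q \<Longrightarrow> p = q"
proof -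
  assume h: "emb p = emb q"
  have "(of_int (fst p)::real) = of_int (fst q)" using arg_cong[OF h, of co1] by (simp add: co1_emb)
  moreover have "(of_int (snd p)::real) = of_int (snd q)" using arg_cong[OF h, of co2] by (simp add: co2_emb)
  ultimately show "p = q" by (simp add: prod_eq_iff)
qed

lemma emb_inj_iff: "emb p = emb q \<longleftrightarrow> p = q"
  using emb_inj by blast

lemma t01: "0 \<le> t \<Longrightarrow> t \<le> 1 \<Longrightarrow> t = of_int m \<or> t = - of_int m \<Longrightarrow> t = 0 \<or> (t::real) = 1"
proof -
  assume a: "0 \<le> t" "t \<le> 1" "t = of_int m \<or> t = - of_int m"
  show ?thesis
  proof (cases "t = of_int m")
    case True
    then have "0 \<le> m" "m \<le> 1" using a by linarith+
    then have "m = 0 \<or> m = 1" by linarith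
    then show ?thesis using True by auto
  next
    case False
    then have T: "t = of_int (- m)" using a by simp
    then have "0 \<le> -m" "-m \<le> 1" using a by linarith+
    then have "-m = 0 \<or> -m = 1" by linarith
    then show ?thesis using T by (metis of_int_0 of_int_1)
  qed
qed

lemma lattice_on_edge:
  assumes "adj a b" "0 \<le> t" "t \<le> 1" "(1 - t) *\<^sub>R emb a + t *\<^sub>R emb b = emb c"
  shows "(t = 0 \<and> c = a) \<or> (t = 1 \<and> c = b)"
proof -
  have R1: "of_int (fst c) = of_int (fst a) + t * of_int (fst b - fst a)"
    using arg_cong[OF assms(4), of co1] unfolding co1_comb co1_emb by (simp add: algebra_simps)
  have R2: "of_int (snd c) = of_int (snd a) + t * of_int (snd b - snd a)"
    using arg_cong[OF assms(4), of co2] unfolding co2_comb co2_emb by (simp add: algebra_simps)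
  have "fst b - fst a = 1 \<or> fst b - fst a = -1 \<or> snd b - snd a = 1 \<or> snd b - snd a = -1"
    using assms(1) unfolding adj_iff2 Let_def by auto
  then have "t = of_int (fst c - fst a) \<or> t = - of_int (fst c - fst a) \<or>
             t = of_int (snd c - snd a) \<or> t = - of_int (snd c - snd a)"
    using R1 R2 by (elim disjE) (simp_all add: algebra_simps)
  then have "t = 0 \<or> t = 1" using t01[OF assms(2,3)] by blast
  then show ?thesis
  proof
    assume "t = 0" then show ?thesis using R1 R2 by (simp add: prod_eq_iff)
  next
    assume "t = 1" then show ?thesis using R1 R2 by (simp add: prod_eq_iff)
  qed
qed

lemma int_abs_small: "\<bar>(of_int d :: real)\<bar> < 2 \<Longrightarrow> d = -1 \<or> d = 0 \<or> d = 1"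
proof -
  assume "\<bar>(of_int d :: real)\<bar> < 2"
  then have "\<bar>d\<bar> < 2" by linarith
  then show ?thesis by linarith
qed

lemma D6_abs: "(e1,e2) \<in> D6 \<Longrightarrow> \<bar>e1\<bar> \<le> 1 \<and> \<bar>e2\<bar> \<le> 1"
  unfolding D6_iff by auto

lemma small_bound:
  fixes t s :: real and e f :: int
  assumes "0 < t" "t < 1" "0 < s" "s < 1" "\<bar>e\<bar> \<le> 1" "\<bar>f\<bar> \<le> 1"
  shows "\<bar>t * of_int e - s * of_int f\<bar> < 2"
proof -
  have "\<bar>of_int e :: real\<bar> \<le> 1" "\<bar>of_int f :: real\<bar> \<le> 1" using assms(5,6) by linarith+
  then have "\<bar>t * of_int e\<bar> \<le> t" "\<bar>s * of_int f\<bar> \<le> s" using assms(1,3)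
    by (simp_all add: abs_mult mult_left_le)
  then show ?thesis using assms(2,4) by linarith
qed

lemma core_cross:
  fixes t s :: real and e1 e2 f1 f2 d1 d2 :: int
  assumes "(e1,e2) \<in> D6" "(f1,f2) \<in> D6" "0 < t" "t < 1" "0 < s" "s < 1"
    "of_int d1 = t * of_int e1 - s * of_int f1" "of_int d2 = t * of_int e2 - s * of_int f2"
  shows "(d1 = 0 \<and> d2 = 0 \<and> f1 = e1 \<and> f2 = e2) \<or> (d1 = e1 \<and> d2 = e2 \<and> f1 = - e1 \<and> f2 = - e2)"
proof -
  have b1: "d1 = -1 \<or> d1 = 0 \<or> d1 = 1"
    using int_abs_small small_bound[OF assms(3-6)] D6_abs[OF assms(1)] D6_abs[OF assms(2)] assms(7) by metis
  have b2: "d2 = -1 \<or> d2 = 0 \<or> d2 = 1"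
    using int_abs_small small_bound[OF assms(3-6)] D6_abs[OF assms(1)] D6_abs[OF assms(2)] assms(8) by metis
  show ?thesis using assms(1,2) b1 b2 assms(3-8) unfolding D6_iff
    apply (elim disjE conjE)
    apply (clarify; ((simp; fail) | linarith))+
    done
qed



lemma drawing_mem: "z \<in> drawing S \<longleftrightarrow> (\<exists>c\<in>S. z = emb c) \<or>
   (\<exists>c d s. c \<in> S \<and> d \<in> S \<and> adj c d \<and> 0 \<le> s \<and> s \<le> 1 \<and> z = (1 - s) *\<^sub>R emb c + s *\<^sub>R emb d)"
proof -
  have A: "z \<in> \<Union> {closed_segment (emb u) (emb v) |u v. u \<in> S \<and> v \<in> S \<and> adj u v} \<longleftrightarrow>
     (\<exists>u v. u \<in> S \<and> v \<in> S \<and> adj u v \<and> (\<exists>s. 0 \<le> s \<and> s \<le> 1 \<and> z = (1 - s) *\<^sub>R emb u + s *\<^sub>R emb v))"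
    unfolding in_segment(1)[symmetric] by blast
  show ?thesis unfolding drawing_def Un_iff A by blast
qed

lemma drawing_mono: "S \<subseteq> T \<Longrightarrow> drawing S \<subseteq> drawing T"
  unfolding drawing_def by blast

lemma emb_notin_drawing: "q \<notin> S \<Longrightarrow> emb q \<notin> drawing S"
proof
  assume q: "q \<notin> S" and "emb q \<in> drawing S"
  then consider (v) c where "c \<in> S" "emb q = emb c"
    | (e) c d s where "c \<in> S" "d \<in> S" "adj c d" "0 \<le> s" "s \<le> 1" "emb q = (1 - s) *\<^sub>R emb c + s *\<^sub>R emb d"
    unfolding drawing_mem by blast
  then show False
  proof cases
    case v then show False using q emb_inj by blast
  next
    case e
    then have "(s = 0 \<and> q = c) \<or> (s = 1 \<and> q = d)" using lattice_on_edge[of c d s q] by simp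
    then show False using e q by blast
  qed
qed

lemma T2p:
  assumes ab: "adj a b" and aS: "a \<notin> S" and t: "0 \<le> t" "t \<le> 1"
    and z: "(1 - t) *\<^sub>R emb a + t *\<^sub>R emb b \<in> drawing S"
  shows "t = 1 \<and> b \<in> S"
proof -
  let ?z = "(1 - t) *\<^sub>R emb a + t *\<^sub>R emb b"
  from z consider (v) c where "c \<in> S" "?z = emb c"
    | (e) c d s where "c \<in> S" "d \<in> S" "adj c d" "0 \<le> s" "s \<le> 1" "?z = (1 - s) *\<^sub>R emb c + s *\<^sub>R emb d"
    unfolding drawing_mem by blast
  then show ?thesis
  proof cases
    case v
    then have "(t = 0 \<and> c = a) \<or> (t = 1 \<and> c = b)" using lattice_on_edge[OF ab t] by blast
    then show ?thesis using v aS by blast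
  next
    case e
    have vert: "?z = emb c' \<Longrightarrow> c' \<in> S \<Longrightarrow> ?thesis" for c'
    proof -
      assume "?z = emb c'" "c' \<in> S"
      then have "(t = 0 \<and> c' = a) \<or> (t = 1 \<and> c' = b)" using lattice_on_edge[OF ab t] by blast
      then show ?thesis using \<open>c' \<in> S\<close> aS by blast
    qed
    show ?thesis
    proof (cases "s = 0 \<or> s = 1")
      case True
      then show ?thesis
      proof (elim disjE)
        assume "s = 0" then have "?z = emb c" using e by simp
        then show ?thesis using vert e(1) by blast
      next
        assume "s = 1" then have "?z = emb d" using e by simp
        then show ?thesis using vert e(2) by blast
      qed
    next
      case False
      then have s01: "0 < s" "s < 1" using e by auto
      have latt: "?z \<noteq> emb x" for x
      proof
        assume "?z = emb x"
        then have "(1 - s) *\<^sub>R emb c + s *\<^sub>R emb d = emb x" using e by simp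
        then have "(s = 0 \<and> x = c) \<or> (s = 1 \<and> x = d)" using lattice_on_edge[OF e(3,4,5)] by blast
        then show False using s01 by auto
      qed
      have t01: "0 < t" "t < 1"
      proof -
        have "t \<noteq> 0" using latt[of a] by (intro notI) simp
        moreover have "t \<noteq> 1" using latt[of b] by (intro notI) simp
        ultimately show "0 < t" "t < 1" using t by auto
      qed
      have E1: "of_int (fst c - fst a) = t * of_int (fst b - fst a) - s * of_int (fst d - fst c)"
        using arg_cong[OF e(6), of co1] unfolding co1_comb co1_emb by (simp add: algebra_simps)
      have E2: "of_int (snd c - snd a) = t * of_int (snd b - snd a) - s * of_int (snd d - snd c)"
        using arg_cong[OF e(6), of co2] unfolding co2_comb co2_emb by (simp add: algebra_simps)
      have D1: "(fst b - fst a, snd b - snd a) \<in> D6" using ab adj_iff by blast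
      have D2: "(fst d - fst c, snd d - snd c) \<in> D6" using e(3) adj_iff by blast
      from core_cross[OF D1 D2 t01 s01 E1 E2]
      have "c = a \<or> (c = b \<and> d = a)" by (auto simp: prod_eq_iff)
      then show ?thesis using aS e by blast
    qed
  qed
qed

lemma T2conn:
  assumes "adj a b" "a \<notin> S" "b \<notin> S"
  shows "emb b \<in> connected_component_set (- drawing S) (emb a)"
proof -
  have "closed_segment (emb a) (emb b) \<subseteq> - drawing S"
  proof
    fix z assume "z \<in> closed_segment (emb a) (emb b)"
    then obtain t where "0 \<le> t" "t \<le> 1" "z = (1 - t) *\<^sub>R emb a + t *\<^sub>R emb b"
      unfolding in_segment(1) by blast
    then show "z \<in> - drawing S" using T2p[OF assms(1,2)] assms(3) by blast
  qed
  then have "closed_segment (emb a) (emb b) \<subseteq> connected_component_set (- drawing S) (emb a)"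
    by (intro connected_component_maximal) auto
  then show ?thesis by auto
qed

lemma T2sub:
  assumes ab: "adj a b" and aS: "a \<notin> S" and z: "z \<in> closed_segment (emb a) (emb b)" "z \<notin> drawing S"
  shows "z \<in> connected_component_set (- drawing S) (emb a)"
proof -
  obtain t where t: "0 \<le> t" "t \<le> 1" "z = (1 - t) *\<^sub>R emb a + t *\<^sub>R emb b"
    using z(1) unfolding in_segment(1) by blast
  have "closed_segment (emb a) z \<subseteq> - drawing S"
  proof
    fix w assume "w \<in> closed_segment (emb a) z"
    then obtain r where r: "0 \<le> r" "r \<le> 1" "w = (1 - r) *\<^sub>R emb a + r *\<^sub>R z"
      unfolding in_segment(1) by blast
    have W: "w = (1 - r * t) *\<^sub>R emb a + (r * t) *\<^sub>R emb b"
      unfolding r(3) t(3) by (simp add: algebra_simps)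
    have rt: "0 \<le> r * t" "r * t \<le> 1" using r t by (auto intro: mult_le_one)
    show "w \<in> - drawing S"
    proof
      assume "w \<in> drawing S"
      then have "r * t = 1 \<and> b \<in> S" using T2p[OF ab aS rt] W by simp
      moreover have "r * t \<le> 1 * t" using r t by (intro mult_right_mono) auto
      ultimately have "t = 1" using t by linarith
      then have "z = emb b" using t by simp
      then show False using z(2) \<open>r * t = 1 \<and> b \<in> S\<close> emb_notin_drawing by (metis drawing_mem)
    qed
  qed
  then have "closed_segment (emb a) z \<subseteq> connected_component_set (- drawing S) (emb a)"
    by (intro connected_component_maximal) auto
  then show ?thesis by auto
qed

lemma closed_drawing: "finite S \<Longrightarrow> closed (drawing S)"
proof -
  assume f: "finite S"
  have sub: "{closed_segment (emb u) (emb v) |u v. u \<in> S \<and> v \<in> S \<and> adj u v}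
     \<subseteq> (\<lambda>(u,v). closed_segment (emb u) (emb v)) ` (S \<times> S)" by auto
  have "finite {closed_segment (emb u) (emb v) |u v. u \<in> S \<and> v \<in> S \<and> adj u v}"
    using finite_subset[OF sub] f by auto
  then have "closed (\<Union> {closed_segment (emb u) (emb v) |u v. u \<in> S \<and> v \<in> S \<and> adj u v})"
    by (intro closed_Union) auto
  moreover have "closed (emb ` S)" using f by (intro finite_imp_closed) auto
  ultimately show ?thesis unfolding drawing_def by (intro closed_Un)
qed



abbreviation KC :: "point set \<Rightarrow> complex \<Rightarrow> complex set" where
  "KC S x \<equiv> connected_component_set (- drawing S) x"

definition grel :: "point set \<Rightarrow> (point \<times> point) set" where
  "grel S = {(x, y). x \<in> S \<and> y \<in> S \<and> adj x y}"

lemma shape_connected_grel: "shape_connected S \<longleftrightarrow> (\<forall>u\<in>S. \<forall>v\<in>S. (u, v) \<in> (grel S)\<^sup>*)"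
  unfolding shape_connected_def grel_def ..

lemma sym_grel: "sym (grel S)"
  unfolding grel_def by (rule symI) (auto intro: adj_sym)

lemma grel_mono: "S \<subseteq> T \<Longrightarrow> (grel S)\<^sup>* \<subseteq> (grel T)\<^sup>*"
  unfolding grel_def by (intro rtrancl_mono) blast

lemma grel_sym_rt: "(a, b) \<in> (grel S)\<^sup>* \<Longrightarrow> (b, a) \<in> (grel S)\<^sup>*"
  by (metis sym_grel sym_rtrancl symD)

lemma KC_trans: "y \<in> KC S x \<Longrightarrow> z \<in> KC S y \<Longrightarrow> z \<in> KC S x"
  by (metis connected_component_eq)

lemma hole_adj:
  assumes "hole_point S h" "adj h x" "x \<notin> S"
  shows "hole_point S x"
proof -
  have h: "h \<notin> S" "emb h \<notin> drawing S" "bounded (KC S (emb h))" using assms(1) unfolding hole_point_def by auto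
  have "emb x \<in> KC S (emb h)" using T2conn[OF assms(2) h(1) assms(3)] .
  then have "KC S (emb x) = KC S (emb h)" by (rule connected_component_eq)
  then show ?thesis unfolding hole_point_def using h assms(3) emb_notin_drawing by auto
qed

definition ray :: "point \<Rightarrow> point \<Rightarrow> nat \<Rightarrow> point" where
  "ray h d k = (fst h + int k * fst d, snd h + int k * snd d)"

lemma ray_Suc: "ray h d (Suc k) = pt_add (ray h d k) d"
  unfolding ray_def pt_add_def by (simp add: algebra_simps)

lemma ray_0: "ray h d 0 = h" unfolding ray_def by simp

lemma emb_ray: "emb (ray h d k) = emb h + of_nat k * emb d"
  unfolding ray_def emb_def by (simp add: algebra_simps)

lemma emb_gdir_nz: "emb (gdir i) \<noteq> 0"
proof
  assume "emb (gdir i) = 0"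
  then have "emb (gdir i) = emb (0,0)" by (simp add: emb_def)
  then have "gdir i = (0,0)" by (rule emb_inj)
  then show False using gdir_D6[of i] unfolding D6_def by auto
qed

lemma ray_hits:
  assumes "hole_point S h"
  shows "\<exists>k. ray h (gdir i) k \<in> S"
proof (rule ccontr)
  assume "\<not> ?thesis"
  then have nS: "\<And>k. ray h (gdir i) k \<notin> S" by blast
  have allh: "hole_point S (ray h (gdir i) k)" for k
  proof (induction k)
    case 0 then show ?case using assms by (simp add: ray_0)
  next
    case (Suc k)
    have "pt_add (ray h (gdir i) k) (gdir i) \<notin> S" using nS[of "Suc k"] by (simp add: ray_Suc)
    then show ?case using hole_adj[OF Suc adj_pt_add] by (simp add: ray_Suc)
  qed
  have inK: "emb (ray h (gdir i) k) \<in> KC S (emb h)" for k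
  proof (induction k)
    case 0 then show ?case using assms by (simp add: ray_0 hole_point_def)
  next
    case (Suc k)
    have n2: "pt_add (ray h (gdir i) k) (gdir i) \<notin> S" using nS[of "Suc k"] by (simp add: ray_Suc)
    have "emb (ray h (gdir i) (Suc k)) \<in> KC S (emb (ray h (gdir i) k))"
      unfolding ray_Suc by (rule T2conn[OF adj_pt_add nS n2])
    then show ?case using KC_trans Suc by blast
  qed
  have "bounded (KC S (emb h))" using assms unfolding hole_point_def by auto
  then obtain B where B: "\<And>z. z \<in> KC S (emb h) \<Longrightarrow> norm z \<le> B" unfolding bounded_iff by blast
  define c where "c = norm (emb (gdir i))"
  have c: "c > 0" unfolding c_def using emb_gdir_nz by auto
  obtain k :: nat where k: "(B + norm (emb h) + 1) / c < of_nat k" using reals_Archimedean2 by blast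
  then have "B + norm (emb h) + 1 < of_nat k * c" using c by (simp add: field_simps)
  moreover have "norm (of_nat k * emb (gdir i)) = of_nat k * c" unfolding c_def by (simp add: norm_mult)
  moreover have "norm (of_nat k * emb (gdir i)) \<le> norm (emb h + of_nat k * emb (gdir i)) + norm (emb h)"
    by (metis add_diff_cancel_left' norm_triangle_ineq4 add.commute)
  moreover have "norm (emb h + of_nat k * emb (gdir i)) \<le> B" using B[OF inK[of k]] by (simp add: emb_ray)
  ultimately show False by linarith
qed

lemma hole_conn_S:
  assumes "hole_point S h" "ray h (gdir i) k \<in> S"
  shows "\<exists>s\<in>S. (h, s) \<in> (grel (shape_area S))\<^sup>*"
  using assms
proof (induction k arbitrary: h)
  case 0 then show ?case by (simp add: ray_0 hole_point_def)
next
  case (Suc k)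
  let ?h' = "pt_add h (gdir i)"
  have ray': "ray ?h' (gdir i) k = ray h (gdir i) (Suc k)"
    unfolding ray_def pt_add_def by (simp add: algebra_simps)
  have hA: "h \<in> shape_area S" using Suc.prems(1) unfolding shape_area_def by auto
  show ?case
  proof (cases "?h' \<in> S")
    case True
    then have "(h, ?h') \<in> grel (shape_area S)" using hA adj_pt_add unfolding grel_def shape_area_def by auto
    then show ?thesis using True by blast
  next
    case False
    then have hh: "hole_point S ?h'" using hole_adj[OF Suc.prems(1) adj_pt_add] by blast
    then obtain s where s: "s \<in> S" "(?h', s) \<in> (grel (shape_area S))\<^sup>*"
      using Suc.IH[of ?h'] Suc.prems(2) ray' by auto
    have "(h, ?h') \<in> grel (shape_area S)" using hA hh adj_pt_add unfolding grel_def shape_area_def by auto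
    then show ?thesis using s by (meson converse_rtrancl_into_rtrancl)
  qed
qed

lemma area_conn_to_S:
  assumes "x \<in> shape_area S"
  shows "\<exists>s\<in>S. (x, s) \<in> (grel (shape_area S))\<^sup>*"
proof (cases "x \<in> S")
  case True then show ?thesis by blast
next
  case False
  then have h: "hole_point S x" using assms unfolding shape_area_def by auto
  obtain k where "ray x (gdir 0) k \<in> S" using ray_hits[OF h] by blast
  then show ?thesis using hole_conn_S[OF h] by blast
qed

lemma area_connected:
  assumes "shape_connected S"
  shows "shape_connected (shape_area S)"
  unfolding shape_connected_grel
proof (intro ballI)
  fix u v assume u: "u \<in> shape_area S" and v: "v \<in> shape_area S"
  obtain s where s: "s \<in> S" "(u, s) \<in> (grel (shape_area S))\<^sup>*" using area_conn_to_S[OF u] by blast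
  obtain t where t: "t \<in> S" "(v, t) \<in> (grel (shape_area S))\<^sup>*" using area_conn_to_S[OF v] by blast
  have "(s, t) \<in> (grel S)\<^sup>*" using assms s t unfolding shape_connected_grel by blast
  then have "(s, t) \<in> (grel (shape_area S))\<^sup>*" using grel_mono[of S "shape_area S"] unfolding shape_area_def by blast
  then show "(u, v) \<in> (grel (shape_area S))\<^sup>*"
    using s t grel_sym_rt by (meson rtrancl_trans)
qed

lemma area_finite:
  assumes "finite S"
  shows "finite (shape_area S)"
proof -
  let ?F = "fst ` S"
  have fF: "finite ?F" using assms by auto
  have "shape_area S \<subseteq> {Min ?F..Max ?F} \<times> snd ` S"
  proof
    fix x assume x: "x \<in> shape_area S"
    show "x \<in> {Min ?F..Max ?F} \<times> snd ` S"
    proof (cases "x \<in> S")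
      case True
      then have "fst x \<in> ?F" "snd x \<in> snd ` S" by auto
      then have "Min ?F \<le> fst x" "fst x \<le> Max ?F" "snd x \<in> snd ` S" using fF by auto
      then show ?thesis by (cases x) auto
    next
      case False
      then have h: "hole_point S x" using x unfolding shape_area_def by auto
      obtain k where k: "ray x (gdir 0) k \<in> S" using ray_hits[OF h] by blast
      obtain k' where k': "ray x (gdir 3) k' \<in> S" using ray_hits[OF h] by blast
      have g0: "gdir 0 = (1,0)" and g3: "gdir 3 = (-1,0)" by (simp_all add: gdir_explicit)
      have kk: "(fst x + int k, snd x) \<in> S" using k unfolding ray_def g0 by simp
      have "fst x + int k \<in> ?F" "snd x \<in> snd ` S" using imageI[OF kk, of fst] imageI[OF kk, of snd] by simp_all
      moreover have "fst x - int k' \<in> ?F" using k' unfolding ray_def g3 by force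
      ultimately have "fst x + int k \<le> Max ?F" "Min ?F \<le> fst x - int k'" using fF by auto
      then show ?thesis using \<open>snd x \<in> snd ` S\<close> by (cases x) auto
    qed
  qed
  moreover have "finite ({Min ?F..Max ?F} \<times> snd ` S)" using assms by auto
  ultimately show ?thesis by (rule finite_subset)
qed



lemma area_no_holes: "\<not> hole_point (shape_area S) q"
proof
  assume hq: "hole_point (shape_area S) q"
  then have qA: "q \<notin> shape_area S" and bA: "bounded (KC (shape_area S) (emb q))"
    unfolding hole_point_def by auto
  then have qS: "q \<notin> S" and nh: "\<not> hole_point S q" unfolding shape_area_def by auto
  have eq: "emb q \<notin> drawing S" using emb_notin_drawing[OF qS] .
  let ?U = "KC S (emb q)"
  have Ub: "\<not> bounded ?U" using nh eq qS unfolding hole_point_def by auto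
  have holeK: "\<not> (z \<in> ?U \<and> z \<in> KC S (emb c))" if "hole_point S c" for z c
  proof
    assume z: "z \<in> ?U \<and> z \<in> KC S (emb c)"
    then have "KC S z = ?U" "KC S z = KC S (emb c)" using connected_component_eq by blast+
    then show False using that Ub unfolding hole_point_def by auto
  qed
  have "?U \<subseteq> - drawing (shape_area S)"
  proof
    fix z assume zU: "z \<in> ?U"
    then have zD: "z \<notin> drawing S" using connected_component_subset by blast
    show "z \<in> - drawing (shape_area S)"
    proof
      assume "z \<in> drawing (shape_area S)"
      then consider (v) c where "c \<in> shape_area S" "z = emb c"
        | (e) c d s where "c \<in> shape_area S" "d \<in> shape_area S" "adj c d" "0 \<le> s" "s \<le> 1"
              "z = (1 - s) *\<^sub>R emb c + s *\<^sub>R emb d"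
        unfolding drawing_mem by blast
      then show False
      proof cases
        case v
        show False
        proof (cases "c \<in> S")
          case True then show False using v zD unfolding drawing_mem by blast
        next
          case False
          then have hc: "hole_point S c" using v unfolding shape_area_def by auto
          then have "emb c \<in> KC S (emb c)" unfolding hole_point_def by auto
          then show False using holeK[OF hc, of z] v zU by auto
        qed
      next
        case e
        have zs1: "z \<in> closed_segment (emb c) (emb d)"
          using e unfolding in_segment(1) by blast
        have zs: "z \<in> closed_segment (emb c) (emb d)" "z \<in> closed_segment (emb d) (emb c)"
          using zs1 closed_segment_commute by blast+
        show False
        proof (cases "c \<in> S")
          case cS: True
          show False
          proof (cases "d \<in> S")
            case True then show False using e cS zD unfolding drawing_mem by blast
          next
            case False
            then have hd: "hole_point S d" using e unfolding shape_area_def by auto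
            have "z \<in> KC S (emb d)" using T2sub[OF adj_sym[OF e(3)] False zs(2) zD] .
            then show False using holeK[OF hd, of z] zU by auto
          qed
        next
          case False
          then have hc: "hole_point S c" using e unfolding shape_area_def by auto
          have "z \<in> KC S (emb c)" using T2sub[OF e(3) False zs(1) zD] .
          then show False using holeK[OF hc, of z] zU by auto
        qed
      qed
    qed
  qed
  then have "?U \<subseteq> KC (shape_area S) (emb q)"
    using eq by (intro connected_component_maximal) auto
  then show False using bA Ub bounded_subset by blast
qed

lemma area_boundary:
  assumes "boundary_point (shape_area S) w"
  shows "w \<in> S"
proof (rule ccontr)
  assume wS: "w \<notin> S"
  obtain x where x: "adj w x" "x \<notin> shape_area S" using assms unfolding boundary_point_def by auto
  have hw: "hole_point S w" using assms wS unfolding boundary_point_def shape_area_def by auto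
  have "x \<notin> S" using x unfolding shape_area_def by auto
  then have "hole_point S x" using hole_adj[OF hw x(1)] by blast
  then show False using x unfolding shape_area_def by auto
qed

lemma area_outer: "\<not> outer_face_point S q \<longleftrightarrow> q \<in> shape_area S"
proof (cases "q \<in> S")
  case True then show ?thesis unfolding outer_face_point_def shape_area_def by auto
next
  case False
  have "emb q \<notin> drawing S" using emb_notin_drawing[OF False] .
  then show ?thesis using False unfolding outer_face_point_def shape_area_def hole_point_def outer_region_def
    by auto
qed

lemma remove_conn:
  assumes c: "shape_connected S" and v: "v \<in> S" and N: "shape_connected {u \<in> S. adj v u}"
    and Nne: "{u \<in> S. adj v u} \<noteq> {}"
  shows "shape_connected (S - {v})"
proof -
  let ?N = "{u \<in> S. adj v u}"
  obtain n0 where n0: "n0 \<in> ?N" using Nne by blast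
  have NS: "?N \<subseteq> S - {v}" using adj_irrefl by auto
  have Nrt: "(x, y) \<in> (grel (S - {v}))\<^sup>*" if "x \<in> ?N" "y \<in> ?N" for x y
    using N that grel_mono[OF NS] unfolding shape_connected_grel by blast
  have key: "(x, y) \<in> (grel S)\<^sup>* \<Longrightarrow> x \<noteq> v \<Longrightarrow>
     (y \<noteq> v \<longrightarrow> (x, y) \<in> (grel (S - {v}))\<^sup>*) \<and> (y = v \<longrightarrow> (\<exists>n\<in>?N. (x, n) \<in> (grel (S - {v}))\<^sup>*))" for x y
  proof (induction rule: rtrancl_induct)
    case base then show ?case by simp
  next
    case (step y z)
    have yz: "y \<in> S" "z \<in> S" "adj y z" using step(2) unfolding grel_def by auto
    show ?case
    proof (cases "y = v")
      case True
      then obtain n where n: "n \<in> ?N" "(x, n) \<in> (grel (S - {v}))\<^sup>*" using step by auto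
      show ?thesis
      proof (intro conjI impI)
        assume "z \<noteq> v"
        then have "z \<in> ?N" using yz True by auto
        then have "(n, z) \<in> (grel (S - {v}))\<^sup>*" using Nrt n by blast
        then show "(x, z) \<in> (grel (S - {v}))\<^sup>*" using n by (meson rtrancl_trans)
      next
        assume "z = v" then show "\<exists>n\<in>?N. (x, n) \<in> (grel (S - {v}))\<^sup>*" using n by blast
      qed
    next
      case False
      then have xy: "(x, y) \<in> (grel (S - {v}))\<^sup>*" using step by auto
      show ?thesis
      proof (intro conjI impI)
        assume "z \<noteq> v"
        then have "(y, z) \<in> grel (S - {v})" using yz False unfolding grel_def by auto
        then show "(x, z) \<in> (grel (S - {v}))\<^sup>*" using xy by (meson rtrancl_into_rtrancl)
      next
        assume "z = v"
        then have "y \<in> ?N" using yz False adj_sym by auto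
        then show "\<exists>n\<in>?N. (x, n) \<in> (grel (S - {v}))\<^sup>*" using xy by blast
      qed
    qed
  qed
  show ?thesis unfolding shape_connected_grel
  proof (intro ballI)
    fix x y assume "x \<in> S - {v}" "y \<in> S - {v}"
    then show "(x, y) \<in> (grel (S - {v}))\<^sup>*" using key c unfolding shape_connected_grel by blast
  qed
qed

lemma remove_noholes:
  assumes f: "finite S" and nh: "\<forall>q. \<not> hole_point S q" and ob: "on_outer_boundary S v"
  shows "\<not> hole_point (S - {v}) q"
proof
  assume hq: "hole_point (S - {v}) q"
  then have bq: "bounded (KC (S - {v}) (emb q))" unfolding hole_point_def by auto
  have mono: "KC S x \<subseteq> KC (S - {v}) x" for x
    by (intro connected_component_mono) (use drawing_mono[of "S - {v}" S] in auto)
  show False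
  proof (cases "q = v")
    case False
    then have qS: "q \<notin> S" using hq unfolding hole_point_def by auto
    have "\<not> hole_point S q" using nh by blast
    then have "\<not> bounded (KC S (emb q))" using emb_notin_drawing[OF qS] qS unfolding hole_point_def by blast
    then show False using bq mono bounded_subset by blast
  next
    case True
    have cl: "closed (drawing (S - {v}))" using f by (intro closed_drawing) auto
    have nv: "emb v \<notin> drawing (S - {v})" by (rule emb_notin_drawing) auto
    obtain e where e: "e > 0" "ball (emb v) e \<subseteq> - drawing (S - {v})"
      using cl nv open_contains_ball[of "- drawing (S - {v})"] by auto
    have "emb v \<in> closure (outer_region S)" using ob unfolding on_outer_boundary_def frontier_def by auto
    then obtain z where z: "z \<in> outer_region S" "dist z (emb v) < e" using e(1) unfolding closure_approachable by blast
    have "ball (emb v) e \<subseteq> KC (S - {v}) (emb v)"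
      using e by (intro connected_component_maximal) auto
    then have zK: "z \<in> KC (S - {v}) (emb v)" using z(2) by (auto simp: dist_commute)
    have "\<not> bounded (KC S z)" using z(1) unfolding outer_region_def by auto
    then have "\<not> bounded (KC (S - {v}) z)" using mono bounded_subset by blast
    moreover have "KC (S - {v}) z = KC (S - {v}) (emb q)" using zK True connected_component_eq by blast
    ultimately show False using bq by simp
  qed
qed



lemma comb6:
  fixes j j' :: nat
  assumes "j < 6" "j' < 6" "j \<noteq> j'"
  shows "card ({0,1,2,3,4,5} - {j, (j+1) mod 6, (j+5) mod 6, j', (j'+1) mod 6, (j'+5) mod 6}) \<le> 2"
proof -
  have "j \<in> {0,1,2,3,4,5}" "j' \<in> {0,1,2,3,4,5}" using assms(1,2) by auto
  then show ?thesis using assms(3)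
    by (elim insertE emptyE) (simp_all add: insert_Diff_if)
qed

lemma cyc_sub: "cyc_interval s l \<subseteq> {0,1,2,3,4,5}"
proof
  fix x assume "x \<in> cyc_interval s l"
  then have "x < 6" unfolding cyc_interval_def by auto
  then show "x \<in> {0,1,2,3,4,5}" by auto
qed



definition dle_inv :: "('p \<Rightarrow> nat) \<Rightarrow> 'p set \<Rightarrow> 'p config \<Rightarrow> bool" where
  "dle_inv off P C \<longleftrightarrow> finite (Se C) \<and>
     (\<forall>p\<in>P. phead C p \<noteq> ptail C p \<longrightarrow> phead C p \<in> Se C \<and> ptail C p \<notin> Se C) \<and>
     simply_connected_shape (Se C) \<and> Se C \<noteq> {} \<and>
     (\<forall>v. boundary_point (Se C) v \<longrightarrow> v \<in> occupied P C) \<and>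
     (\<forall>p\<in>P. \<forall>i<6. pelig C p i \<longleftrightarrow> port_pt off C p i \<in> Se C) \<and>
     (\<forall>p\<in>P. \<forall>q\<in>P. p \<noteq> q \<longrightarrow> phead C p \<notin> {phead C q, ptail C q} \<and> ptail C p \<notin> {phead C q, ptail C q})"

lemma inv_cong:
  assumes "Se C' = Se C" "phead C' = phead C" "ptail C' = ptail C" "pelig C' = pelig C"
  shows "dle_inv off P C' = dle_inv off P C"
  unfolding dle_inv_def occupied_def port_pt_def assms ..

lemma inv_init:
  assumes "permitted_init off P C"
  shows "dle_inv off P C"
proof -
  let ?S = "phead C ` P"
  have fP: "finite P" and ne: "P \<noteq> {}" and tl: "\<forall>p\<in>P. ptail C p = phead C p"
    and inj: "inj_on (phead C) P" and conn: "shape_connected ?S"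
    and el: "\<forall>p\<in>P. \<forall>i<6. pelig C p i \<longleftrightarrow> \<not> outer_face_point ?S (port_pt off C p i)"
    and SeD: "Se C = shape_area ?S"
    using assms unfolding permitted_init_def by auto
  have f: "finite (Se C)" unfolding SeD using fP by (intro area_finite) auto
  have sc: "simply_connected_shape (Se C)"
    unfolding SeD simply_connected_shape_def using area_connected[OF conn] area_no_holes by blast
  have nemp: "Se C \<noteq> {}" unfolding SeD shape_area_def using ne by auto
  have bd: "\<forall>v. boundary_point (Se C) v \<longrightarrow> v \<in> occupied P C"
    unfolding SeD occupied_def using area_boundary by blast
  have pe: "\<forall>p\<in>P. \<forall>i<6. pelig C p i \<longleftrightarrow> port_pt off C p i \<in> Se C"
    unfolding SeD using el area_outer by blast
  have dj: "\<forall>p\<in>P. \<forall>q\<in>P. p \<noteq> q \<longrightarrow> phead C p \<notin> {phead C q, ptail C q} \<and> ptail C p \<notin> {phead C q, ptail C q}"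
    using tl inj unfolding inj_on_def by auto
  show ?thesis unfolding dle_inv_def using f sc nemp bd pe dj tl by auto
qed

lemma invD:
  assumes "dle_inv off P C"
  shows "finite (Se C)"
    "\<And>p. p\<in>P \<Longrightarrow> phead C p \<noteq> ptail C p \<Longrightarrow> phead C p \<in> Se C \<and> ptail C p \<notin> Se C"
    "simply_connected_shape (Se C)" "Se C \<noteq> {}"
    "\<And>v. boundary_point (Se C) v \<Longrightarrow> v \<in> occupied P C"
    "\<And>p i. p\<in>P \<Longrightarrow> i < 6 \<Longrightarrow> pelig C p i \<longleftrightarrow> port_pt off C p i \<in> Se C"
    "\<And>p q. p\<in>P \<Longrightarrow> q\<in>P \<Longrightarrow> p \<noteq> q \<Longrightarrow> phead C p \<notin> {phead C q, ptail C q} \<and> ptail C p \<notin> {phead C q, ptail C q}"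
  using assms unfolding dle_inv_def by auto

lemma inv_nbrs:
  assumes "dle_inv off P C" "u \<in> Se C" "u \<notin> occupied P C" "adj u x"
  shows "x \<in> Se C"
proof (rule ccontr)
  assume "x \<notin> Se C"
  then have "boundary_point (Se C) u" unfolding boundary_point_def using assms(2,4) by blast
  then show False using invD(5)[OF assms(1)] assms(3) by blast
qed

lemma inv_one_free:
  assumes I: "dle_inv off P C" and sce: "SCE (Se C) v"
    and u1: "adj v u1" "u1 \<in> Se C" "u1 \<noteq> v" "u1 \<notin> occupied P C"
    and u2: "adj v u2" "u2 \<in> Se C" "u2 \<noteq> v" "u2 \<notin> occupied P C"
  shows "u1 = u2"
proof (rule ccontr)
  assume ne: "u1 \<noteq> u2"
  obtain B where B: "local_boundary (Se C) v B" "boundary_count B > 0" using sce unfolding SCE_def by blast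
  obtain s l where sl: "B = cyc_interval s l" and Bout: "\<forall>i\<in>B. pt_add v (gdir i) \<notin> Se C"
    using B(1) unfolding local_boundary_def by blast
  have cB: "card B \<ge> 3" using B(2) unfolding boundary_count_def by simp
  have excl: "j mod 6 \<notin> B \<and> (j+1) mod 6 \<notin> B \<and> (j+5) mod 6 \<notin> B"
    if "u = pt_add v (gdir j)" "adj v u" "u \<in> Se C" "u \<notin> occupied P C" for u j
  proof -
    have a1: "pt_add v (gdir (j+1)) \<in> Se C"
      using inv_nbrs[OF I that(3,4) adj_pt_add[of u "j+2"]] gdir_next[of v j] that(1) by simp
    have a2: "pt_add v (gdir (j+5)) \<in> Se C"
      using inv_nbrs[OF I that(3,4) adj_pt_add[of u "j+4"]] gdir_prev[of v j] that(1) by simp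
    have "pt_add v (gdir (j mod 6)) \<in> Se C" using that gdir_mod by simp
    moreover have "pt_add v (gdir ((j+1) mod 6)) \<in> Se C" using a1 gdir_mod by metis
    moreover have "pt_add v (gdir ((j+5) mod 6)) \<in> Se C" using a2 gdir_mod by metis
    ultimately show ?thesis using Bout by blast
  qed
  obtain j1 where j1: "j1 < 6" "u1 = pt_add v (gdir j1)" using adj_ex[OF u1(1)] by blast
  obtain j2 where j2: "j2 < 6" "u2 = pt_add v (gdir j2)" using adj_ex[OF u2(1)] by blast
  have e1: "j1 \<notin> B" "(j1+1) mod 6 \<notin> B" "(j1+5) mod 6 \<notin> B" using excl[OF j1(2) u1(1,2,4)] j1(1) by auto
  have e2: "j2 \<notin> B" "(j2+1) mod 6 \<notin> B" "(j2+5) mod 6 \<notin> B" using excl[OF j2(2) u2(1,2,4)] j2(1) by auto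
  have jne: "j1 \<noteq> j2" using ne j1 j2 by auto
  have "B \<subseteq> {0,1,2,3,4,5} - {j1, (j1+1) mod 6, (j1+5) mod 6, j2, (j2+1) mod 6, (j2+5) mod 6}"
    using cyc_sub[of s l] sl e1 e2 by auto
  then have "card B \<le> card ({0,1,2,3,4,5} - {j1, (j1+1) mod 6, (j1+5) mod 6, j2, (j2+1) mod 6, (j2+5) mod 6})"
    by (intro card_mono) auto
  also have "\<dots> \<le> 2" using comb6[OF j1(1) j2(1) jne] .
  finally show False using cB by simp
qed

lemma inv_Se':
  assumes I: "dle_inv off P C" and pP: "p \<in> P" and v: "v = phead C p" and sce: "SCE (Se C) v"
    and el: "\<exists>i<6. pelig C p i"
  shows "finite (Se C - {v}) \<and> simply_connected_shape (Se C - {v}) \<and> Se C - {v} \<noteq> {}"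
proof -
  have vS: "v \<in> Se C" using sce unfolding SCE_def erodable_def redundant_def by auto
  obtain i where i: "i < 6" "pelig C p i" using el by blast
  have w: "port_pt off C p i \<in> Se C" using invD(6)[OF I pP] i by blast
  have wv: "port_pt off C p i \<noteq> v" unfolding port_pt_def v by (rule pt_add_gdir_neq)
  have wadj: "adj v (port_pt off C p i)" unfolding port_pt_def v by (rule adj_pt_add)
  have ne: "{u \<in> Se C. adj v u} \<noteq> {}" using w wadj by blast
  have Nc: "shape_connected {u \<in> Se C. adj v u}" using sce unfolding SCE_def erodable_def redundant_def by auto
  have c: "shape_connected (Se C)" and nh: "\<forall>q. \<not> hole_point (Se C) q"
    using invD(3)[OF I] unfolding simply_connected_shape_def by auto
  have f: "finite (Se C)" using invD(1)[OF I] .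
  have ob: "on_outer_boundary (Se C) v" using sce unfolding SCE_def erodable_def by auto
  have "shape_connected (Se C - {v})" by (rule remove_conn[OF c vS Nc ne])
  moreover have "\<forall>q. \<not> hole_point (Se C - {v}) q" using remove_noholes[OF f nh ob] by blast
  ultimately show ?thesis using f w wv unfolding simply_connected_shape_def by auto
qed



lemma el1_ok:
  assumes I: "dle_inv off P C" and pP: "p \<in> P" and hv: "phead C p = v" and qP: "q \<in> P" and qp: "q \<noteq> p" and i: "i < 6"
  shows "(if q \<in> nbr_particles P C p \<and> adj (phead C q) v \<and> port_pt off C q i = v then False else pelig C q i)
     \<longleftrightarrow> port_pt off C q i \<in> Se C - {v}"
proof (cases "port_pt off C q i = v")
  case True
  have a: "adj (phead C q) v" using True adj_pt_add unfolding port_pt_def by metis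
  then have "q \<in> nbr_particles P C p" unfolding nbr_particles_def using qP qp hv adj_sym by blast
  then show ?thesis using True a by simp
next
  case False
  then show ?thesis using invD(6)[OF I qP i] by simp
qed

lemma inv_expand:
  assumes I: "dle_inv off P C" and pP: "p \<in> P" and hv: "phead C p = v" and tv: "ptail C p = v"
    and sce: "SCE (Se C) v" and el: "\<exists>i<6. pelig C p i"
    and u: "adj v u" "u \<in> Se C - {v}" "u \<notin> occupied P C"
    and C1: "Se C' = Se C - {v}" and C2: "phead C' = (phead C)(p := u)" and C3: "ptail C' = ptail C"
    and C4: "pelig C' = (\<lambda>q i. if q \<in> nbr_particles P C p \<and> adj (phead C q) v \<and> port_pt off C q i = v then False else pelig C q i)
                (p := (\<lambda>i. pt_add u (gdir (i + off p)) \<noteq> v))"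
  shows "dle_inv off P C'"
proof -
  have Se': "finite (Se C - {v}) \<and> simply_connected_shape (Se C - {v}) \<and> Se C - {v} \<noteq> {}"
    using inv_Se'[OF I pP hv[symmetric] sce el] .
  have occ: "occupied P C \<subseteq> occupied P C'"
  proof
    fix w assume "w \<in> occupied P C"
    then obtain q where q: "q \<in> P" "w = phead C q \<or> w = ptail C q" unfolding occupied_def by auto
    show "w \<in> occupied P C'"
    proof (cases "q = p")
      case True then have "w = ptail C' p" using q hv tv C3 by auto
      then show ?thesis using pP unfolding occupied_def by auto
    next
      case False then show ?thesis using q C2 C3 unfolding occupied_def by auto
    qed
  qed
  have uocc: "u \<in> occupied P C'" using pP C2 unfolding occupied_def by auto
  have I1: "\<forall>q\<in>P. phead C' q \<noteq> ptail C' q \<longrightarrow> phead C' q \<in> Se C' \<and> ptail C' q \<notin> Se C'"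
  proof (intro ballI impI)
    fix q assume qP: "q \<in> P" and ex: "phead C' q \<noteq> ptail C' q"
    show "phead C' q \<in> Se C' \<and> ptail C' q \<notin> Se C'"
    proof (cases "q = p")
      case True then show ?thesis using C1 C2 C3 u tv by auto
    next
      case False
      then have "phead C q \<noteq> ptail C q" using ex C2 C3 by auto
      then have "phead C q \<in> Se C \<and> ptail C q \<notin> Se C" using invD(2)[OF I qP] by blast
      moreover have "phead C q \<noteq> v" using invD(7)[OF I qP pP False] hv by auto
      ultimately show ?thesis using C1 C2 C3 False by auto
    qed
  qed
  have I3: "\<forall>w. boundary_point (Se C') w \<longrightarrow> w \<in> occupied P C'"
  proof (intro allI impI)
    fix w assume "boundary_point (Se C') w"
    then obtain x where w: "w \<in> Se C - {v}" "adj w x" "x \<notin> Se C - {v}" unfolding boundary_point_def C1 by auto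
    show "w \<in> occupied P C'"
    proof (cases "x \<in> Se C")
      case True
      then have xv: "x = v" using w by auto
      show ?thesis
      proof (cases "w \<in> occupied P C")
        case True then show ?thesis using occ by auto
      next
        case False
        have "w = u" using inv_one_free[OF I sce adj_sym[OF w(2)[unfolded xv]] _ _ False u(1)] w u by auto
        then show ?thesis using uocc by simp
      qed
    next
      case False
      then have "boundary_point (Se C) w" unfolding boundary_point_def using w by blast
      then show ?thesis using invD(5)[OF I] occ by blast
    qed
  qed
  have I4: "\<forall>q\<in>P. \<forall>i<6. pelig C' q i \<longleftrightarrow> port_pt off C' q i \<in> Se C'"
  proof (intro ballI allI impI)
    fix q i assume qP: "q \<in> P" and i: "(i::nat) < 6"
    show "pelig C' q i \<longleftrightarrow> port_pt off C' q i \<in> Se C'"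
    proof (cases "q = p")
      case True
      have pp: "port_pt off C' q i = pt_add u (gdir (i + off p))" unfolding port_pt_def C2 True by simp
      have "pt_add u (gdir (i + off p)) \<in> Se C" using inv_nbrs[OF I _ u(3) adj_pt_add] u(2) by blast
      then show ?thesis unfolding pp C4 C1 using True by auto
    next
      case False
      have pp: "port_pt off C' q i = port_pt off C q i" unfolding port_pt_def C2 using False by simp
      show ?thesis unfolding pp C4 C1 using False el1_ok[OF I pP hv qP False i] by simp
    qed
  qed
  have I5: "\<forall>q1\<in>P. \<forall>q2\<in>P. q1 \<noteq> q2 \<longrightarrow> phead C' q1 \<notin> {phead C' q2, ptail C' q2} \<and> ptail C' q1 \<notin> {phead C' q2, ptail C' q2}"
  proof (intro ballI impI)
    fix q1 q2 assume q1: "q1 \<in> P" and q2: "q2 \<in> P" and ne: "q1 \<noteq> q2"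
    have old: "phead C q1 \<notin> {phead C q2, ptail C q2} \<and> ptail C q1 \<notin> {phead C q2, ptail C q2}"
      using invD(7)[OF I q1 q2 ne] .
    have uo: "u \<noteq> phead C q" "u \<noteq> ptail C q" if "q \<in> P" for q using u(3) that unfolding occupied_def by auto
    show "phead C' q1 \<notin> {phead C' q2, ptail C' q2} \<and> ptail C' q1 \<notin> {phead C' q2, ptail C' q2}"
      using old uo[OF q1] uo[OF q2] ne unfolding C2 C3 by (cases "q1 = p"; cases "q2 = p") auto
  qed
  show ?thesis unfolding dle_inv_def using Se' I1 I3 I4 I5 C1 by simp
qed

lemma inv_follow:
  assumes I: "dle_inv off P C" and pP: "p \<in> P" and hv: "phead C p = v" and tv: "ptail C p = v"
    and sce: "SCE (Se C) v" and el: "\<exists>i<6. pelig C p i"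
    and nofree: "{u. adj v u \<and> u \<in> Se C - {v} \<and> u \<notin> occupied P C} = {}"
    and C1: "Se C' = Se C - {v}" and C2: "phead C' = phead C" and C3: "ptail C' = ptail C"
    and C4: "pelig C' = (\<lambda>q i. if q \<in> nbr_particles P C p \<and> adj (phead C q) v \<and> port_pt off C q i = v then False else pelig C q i)"
  shows "dle_inv off P C'"
proof -
  have Se': "finite (Se C - {v}) \<and> simply_connected_shape (Se C - {v}) \<and> Se C - {v} \<noteq> {}"
    using inv_Se'[OF I pP hv[symmetric] sce el] .
  have occ: "occupied P C' = occupied P C" unfolding occupied_def C2 C3 ..
  have I1: "\<forall>q\<in>P. phead C' q \<noteq> ptail C' q \<longrightarrow> phead C' q \<in> Se C' \<and> ptail C' q \<notin> Se C'"
  proof (intro ballI impI)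
    fix q assume qP: "q \<in> P" and ex: "phead C' q \<noteq> ptail C' q"
    then have qp: "q \<noteq> p" using hv tv C2 C3 by auto
    have "phead C q \<noteq> ptail C q" using ex C2 C3 by auto
    then have "phead C q \<in> Se C \<and> ptail C q \<notin> Se C" using invD(2)[OF I qP] by blast
    moreover have "phead C q \<noteq> v" using invD(7)[OF I qP pP qp] hv by auto
    ultimately show "phead C' q \<in> Se C' \<and> ptail C' q \<notin> Se C'" using C1 C2 C3 by auto
  qed
  have I3: "\<forall>w. boundary_point (Se C') w \<longrightarrow> w \<in> occupied P C'"
  proof (intro allI impI)
    fix w assume "boundary_point (Se C') w"
    then obtain x where w: "w \<in> Se C - {v}" "adj w x" "x \<notin> Se C - {v}" unfolding boundary_point_def C1 by auto
    show "w \<in> occupied P C'"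
    proof (cases "x \<in> Se C")
      case True
      then have xv: "x = v" using w by auto
      then show ?thesis using nofree w adj_sym occ by blast
    next
      case False
      then have "boundary_point (Se C) w" unfolding boundary_point_def using w by blast
      then show ?thesis using invD(5)[OF I] occ by blast
    qed
  qed
  have I4: "\<forall>q\<in>P. \<forall>i<6. pelig C' q i \<longleftrightarrow> port_pt off C' q i \<in> Se C'"
  proof (intro ballI allI impI)
    fix q i assume qP: "q \<in> P" and i: "(i::nat) < 6"
    have pp: "port_pt off C' q i = port_pt off C q i" unfolding port_pt_def C2 by simp
    show "pelig C' q i \<longleftrightarrow> port_pt off C' q i \<in> Se C'"
    proof (cases "q = p")
      case True
      have "q \<notin> nbr_particles P C p" unfolding nbr_particles_def using True by auto
      moreover have "port_pt off C q i \<noteq> v" unfolding port_pt_def True hv by (rule pt_add_gdir_neq)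
      ultimately show ?thesis unfolding pp C4 C1 using invD(6)[OF I qP i] by simp
    next
      case False
      show ?thesis unfolding pp C4 C1 using el1_ok[OF I pP hv qP False i] by simp
    qed
  qed
  have I5: "\<forall>q1\<in>P. \<forall>q2\<in>P. q1 \<noteq> q2 \<longrightarrow> phead C' q1 \<notin> {phead C' q2, ptail C' q2} \<and> ptail C' q1 \<notin> {phead C' q2, ptail C' q2}"
    using invD(7)[OF I] unfolding C2 C3 by blast
  show ?thesis unfolding dle_inv_def using Se' I1 I3 I4 I5 C1 by simp
qed

lemma inv_contract:
  assumes I: "dle_inv off P C" and pP: "p \<in> P"
    and C1: "Se C' = Se C" and C2: "phead C' = phead C" and C3: "ptail C' = (ptail C)(p := phead C p)"
    and C4: "pelig C' = pelig C"
  shows "dle_inv off P C'"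
proof -
  have occ: "occupied P C' \<supseteq> occupied P C - {ptail C p}"
    unfolding occupied_def C2 C3 by auto
  have I1: "\<forall>q\<in>P. phead C' q \<noteq> ptail C' q \<longrightarrow> phead C' q \<in> Se C' \<and> ptail C' q \<notin> Se C'"
    using invD(2)[OF I] unfolding C1 C2 C3 by auto
  have I3: "\<forall>w. boundary_point (Se C') w \<longrightarrow> w \<in> occupied P C'"
  proof (intro allI impI)
    fix w assume b: "boundary_point (Se C') w"
    then have wS: "w \<in> Se C" and bw: "boundary_point (Se C) w" unfolding C1 boundary_point_def by auto
    have "w \<in> occupied P C" using invD(5)[OF I bw] .
    moreover have "w \<noteq> ptail C p \<or> w \<in> occupied P C'"
    proof (cases "phead C p = ptail C p")
      case True
      have "phead C' p \<in> occupied P C'" using pP unfolding occupied_def by blast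
      then show ?thesis using True C2 by (metis fun_upd_same)
    next
      case False then show ?thesis using invD(2)[OF I pP] wS by auto
    qed
    ultimately show "w \<in> occupied P C'" using occ by auto
  qed
  have I4: "\<forall>q\<in>P. \<forall>i<6. pelig C' q i \<longleftrightarrow> port_pt off C' q i \<in> Se C'"
    using invD(6)[OF I] unfolding C1 C4 port_pt_def C2 by auto
  have I5: "\<forall>q1\<in>P. \<forall>q2\<in>P. q1 \<noteq> q2 \<longrightarrow> phead C' q1 \<notin> {phead C' q2, ptail C' q2} \<and> ptail C' q1 \<notin> {phead C' q2, ptail C' q2}"
    using invD(7)[OF I] unfolding C2 C3 by auto
  show ?thesis unfolding dle_inv_def using invD(1,3,4)[OF I] I1 I3 I4 I5 C1 by simp
qed



lemma inv_step:
  assumes I: "dle_inv off P C" and pP: "p \<in> P" and A: "dle_act off P p C C'"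
  shows "dle_inv off P C'"
proof (cases "pterm C p")
  case c1: True
  then have "C' = C" using A unfolding dle_act_def Let_def by simp
  then show ?thesis using I by simp
next
  case c1: False
  show ?thesis
  proof (cases "phead C p \<noteq> ptail C p")
    case c2: True
    then have "C' = C\<lparr>ptail := (ptail C)(p := phead C p)\<rparr>"
      using A unfolding dle_act_def Let_def if_not_P[OF c1] if_P[OF c2] by simp
    then show ?thesis by (intro inv_contract[OF I pP]) simp_all
  next
    case c2: False
    have tv: "ptail C p = phead C p" using c2 by simp
    show ?thesis
    proof (cases "pstatus C p \<noteq> Undecided \<and> (\<forall>q\<in>nbr_particles P C p. pstatus C q \<noteq> Undecided)")
      case c3: True
      then have "C' = C\<lparr>pterm := (pterm C)(p := True)\<rparr>"
        using A unfolding dle_act_def Let_def if_not_P[OF c1] if_not_P[OF c2] if_P[OF c3] by simp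
      then show ?thesis using inv_cong[of C' C off P] I by simp
    next
      case c3: False
      show ?thesis
      proof (cases "pstatus C p = Undecided")
        case c4: False
        then have "C' = C"
          using A unfolding dle_act_def Let_def if_not_P[OF c1] if_not_P[OF c2] if_not_P[OF c3] if_not_P[OF c4] by simp
        then show ?thesis using I by simp
      next
        case c4: True
        show ?thesis
        proof (cases "\<forall>i<6. \<not> pelig C p i")
          case c5: True
          then have "C' = C\<lparr>pstatus := (pstatus C)(p := Leader)\<rparr>"
            using A unfolding dle_act_def Let_def if_not_P[OF c1] if_not_P[OF c2] if_not_P[OF c3] if_P[OF c4] if_P[OF c5]
            by simp
          then show ?thesis using inv_cong[of C' C off P] I by simp
        next
          case c5: False
          have el: "\<exists>i<6. pelig C p i" using c5 by blast
          show ?thesis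
          proof (cases "SCE (Se C) (phead C p)")
            case c6: False
            then have "C' = C"
              using A unfolding dle_act_def Let_def if_not_P[OF c1] if_not_P[OF c2] if_not_P[OF c3] if_P[OF c4]
                if_not_P[OF c5] if_not_P[OF c6] by simp
            then show ?thesis using I by simp
          next
            case c6: True
            let ?v = "phead C p"
            let ?el1 = "(\<lambda>q i. if q \<in> nbr_particles P C p \<and> adj (phead C q) ?v \<and> port_pt off C q i = ?v
                             then False else pelig C q i)"
            let ?free = "{u. adj ?v u \<and> u \<in> Se C - {?v} \<and> u \<notin> occupied P C}"
            have D: "(\<exists>u\<in>?free. C' = C\<lparr>Se := Se C - {?v},
                                 pelig := ?el1(p := (\<lambda>i. pt_add u (gdir (i + off p)) \<noteq> ?v)),
                                 phead := (phead C)(p := u)\<rparr>)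
              \<or> (?free = {} \<and> C' = C\<lparr>Se := Se C - {?v}, pelig := ?el1,
                                     pstatus := (pstatus C)(p := Follower)\<rparr>)"
              using A unfolding dle_act_def Let_def if_not_P[OF c1] if_not_P[OF c2] if_not_P[OF c3] if_P[OF c4]
                if_not_P[OF c5] if_P[OF c6] .
            then show ?thesis
            proof (elim disjE conjE bexE)
              fix u assume u: "u \<in> ?free" and eq: "C' = C\<lparr>Se := Se C - {?v},
                                 pelig := ?el1(p := (\<lambda>i. pt_add u (gdir (i + off p)) \<noteq> ?v)),
                                 phead := (phead C)(p := u)\<rparr>"
              show ?thesis
                by (rule inv_expand[OF I pP refl tv c6 el]) (use u eq in auto)
            next
              assume nf: "?free = {}" and eq: "C' = C\<lparr>Se := Se C - {?v}, pelig := ?el1,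
                                     pstatus := (pstatus C)(p := Follower)\<rparr>"
              show ?thesis
                by (rule inv_follow[OF I pP refl tv c6 el nf]) (use eq in auto)
            qed
          qed
        qed
      qed
    qed
  qed
qed

theorem lemma4p2:
  fixes off :: "'p \<Rightarrow> nat" and P :: "'p set"
    and E :: "nat \<Rightarrow> 'p config" and sched :: "nat \<Rightarrow> 'p" and n :: nat
  assumes "fair_dle_execution off P E sched"
  shows "(\<forall>p\<in>P. phead (E n) p \<noteq> ptail (E n) p \<longrightarrow>
              phead (E n) p \<in> Se (E n) \<and> ptail (E n) p \<notin> Se (E n))
       \<and> simply_connected_shape (Se (E n)) \<and> Se (E n) \<noteq> {}
       \<and> (\<forall>v. boundary_point (Se (E n)) v \<longrightarrow> v \<in> occupied P (E n))
       \<and> (\<forall>p\<in>P. \<forall>i<6. pelig (E n) p i \<longleftrightarrow> port_pt off (E n) p i \<in> Se (E n))"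
proof -
  have init: "permitted_init off P (E 0)" and st: "\<And>n. sched n \<in> P \<and> dle_act off P (sched n) (E n) (E (Suc n))"
    using assms unfolding fair_dle_execution_def by auto
  have "dle_inv off P (E n)"
  proof (induction n)
    case 0 then show ?case using inv_init[OF init] .
  next
    case (Suc n) then show ?case using inv_step[OF Suc.IH, of "sched n" "E (Suc n)"] st[of n] by simp
  qed
  then show ?thesis unfolding dle_inv_def by (elim conjE) (intro conjI; assumption)
qed


end
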